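(* Let $n$ be a positive integer and $k$ an integer with $0\le k\le n$. Then $$e_k\left(\left\{\sin^2\left(\tfrac{(2j-1)\pi}{4n+2}\right) : j=1,\dots,n\right\}\right) = \frac{4^{-k}(2n-k)!}{(2n-2k)!\,k!}.$$
   Context: $e_k(\alpha_1,\dots,\alpha_n)$ denotes the degree-$k$ elementary symmetric function of $\alpha_1,\dots,\alpha_n$ (with $e_0=1$). *)

theory Defs
  imports Complex_Main
begin

definition esym :: "nat \<Rightarrow> 'i set \<Rightarrow> ('i \<Rightarrow> 'a::comm_semiring_1) \<Rightarrow> 'a" where
  "esym k I x = (\<Sum>S\<in>{S. S \<subseteq> I \<and> card S = k}. \<Prod>i\<in>S. x i)"

end

theory Submission
  imports Defs "HOL-Computational_Algebra.Polynomial"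
begin


definition SS :: "nat \<Rightarrow> real \<Rightarrow> real" where
  "SS N c = (\<Sum>k\<le>N. (-1)^k * real ((N-k) choose k) * c^(N-2*k))"

lemma SS_rec: "SS (Suc (Suc N)) c = c * SS (Suc N) c - SS N c"
proof -
  have pas: "((Suc (Suc N) - k) choose k) = ((Suc N - k) choose k) + (if k = 0 then 0 else ((Suc N - k) choose (k - 1)))" for k
  proof (cases "k = 0")
    case False
    show ?thesis
    proof (cases "k \<le> Suc N")
      case True
      then have "Suc (Suc N) - k = Suc (Suc N - k)" by simp
      moreover obtain j where "k = Suc j" using False not0_implies_Suc by blast
      ultimately show ?thesis using False by simp
    next
      case False
      then show ?thesis using \<open>k \<noteq> 0\<close> by simp
    qed
  qed simp
  define T1 where "T1 = (\<Sum>k\<le>Suc (Suc N). (-1)^k * real ((Suc N - k) choose k) * c^(Suc (Suc N)-2*k))"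
  define T2 where "T2 = (\<Sum>k\<le>Suc (Suc N). (if k = 0 then 0 else (-1)^k * real ((Suc N - k) choose (k-1)) * c^(Suc (Suc N)-2*k)))"
  have "SS (Suc (Suc N)) c = T1 + T2"
    unfolding SS_def T1_def T2_def sum.distrib[symmetric]
    by (rule sum.cong) (auto simp: pas algebra_simps)
  moreover have "T1 = c * SS (Suc N) c"
  proof -
    have "T1 = (\<Sum>k\<le>Suc N. (-1)^k * real ((Suc N - k) choose k) * c^(Suc (Suc N)-2*k))"
      unfolding T1_def by simp
    also have "\<dots> = (\<Sum>k\<le>Suc N. c * ((-1)^k * real ((Suc N - k) choose k) * c^(Suc N-2*k)))"
    proof (rule sum.cong)
      fix k assume "k \<in> {..Suc N}"
      show "(-1)^k * real ((Suc N - k) choose k) * c^(Suc (Suc N)-2*k) = c * ((-1)^k * real ((Suc N - k) choose k) * c^(Suc N-2*k))"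
      proof (cases "2*k \<le> Suc N")
        case True
        then have "Suc (Suc N) - 2*k = Suc (Suc N - 2*k)" by simp
        then show ?thesis by simp
      next
        case False
        then have "(Suc N - k) choose k = 0" by (intro binomial_eq_0) simp
        then show ?thesis by simp
      qed
    qed simp
    finally show ?thesis unfolding SS_def by (simp add: sum_distrib_left)
  qed
  moreover have "T2 = - SS N c"
  proof -
    have "T2 = (\<Sum>j\<le>Suc N. (-1)^(Suc j) * real ((Suc N - Suc j) choose j) * c^(Suc (Suc N)-2*Suc j))"
      unfolding T2_def by (subst sum.atMost_Suc_shift) simp
    also have "\<dots> = (\<Sum>j\<le>N. (-1)^(Suc j) * real ((N - j) choose j) * c^(N-2*j))"
      by simp
    finally show ?thesis unfolding SS_def by (simp add: sum_negf[symmetric])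
  qed
  ultimately show ?thesis by simp
qed

lemma cheb: "sin (real (Suc N) * x) = sin x * SS N (2 * cos x) \<and> sin (real (Suc (Suc N)) * x) = sin x * SS (Suc N) (2 * cos x)"
proof (induction N)
  case 0
  show ?case by (simp add: SS_def sin_double)
next
  case (Suc N)
  have "sin (real (Suc (Suc (Suc N))) * x) = 2 * cos x * sin (real (Suc (Suc N)) * x) - sin (real (Suc N) * x)"
  proof -
    have e: "sin (a + x) = 2 * cos x * sin a - sin (a - x)" for a :: real
      by (simp add: sin_add sin_diff algebra_simps)
    have "real (Suc (Suc (Suc N))) * x = real (Suc (Suc N)) * x + x" by (simp add: algebra_simps)
    moreover have "real (Suc N) * x = real (Suc (Suc N)) * x - x" by (simp add: algebra_simps)
    ultimately show ?thesis using e by metis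
  qed
  then show ?case using Suc by (simp add: SS_rec algebra_simps)
qed



lemma roots_prod:
  fixes q :: "'a::field poly"
  assumes "finite A" "card A = degree q" "lead_coeff q = 1" "\<forall>a\<in>A. poly q a = 0"
  shows "q = (\<Prod>a\<in>A. [:-a, 1:])"
  using assms
proof (induction A arbitrary: q rule: finite_induct)
  case empty
  then have "degree q = 0" by simp
  then have "q = [:coeff q 0:]" using degree_0_id by metis
  then show ?case using empty by simp
next
  case (insert a A)
  then have "[:-a,1:] dvd q" using poly_eq_0_iff_dvd by blast
  then obtain r where r: "q = [:-a,1:] * r" by (elim dvdE)
  have q0: "q \<noteq> 0" using insert by auto
  then have r0: "r \<noteq> 0" using r by auto
  have "degree ([:-a,1:] * r) = degree [:-a,1:] + degree r" by (rule degree_mult_eq) (use r0 in auto)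
  then have "degree q = 1 + degree r" using r by simp
  then have dr: "card A = degree r" using insert by simp
  have "lead_coeff ([:-a,1:] * r) = lead_coeff [:-a,1:] * lead_coeff r" by (rule lead_coeff_mult)
  then have lr: "lead_coeff r = 1" using insert(5) r by simp
  have "\<forall>b\<in>A. poly r b = 0"
  proof
    fix b assume b: "b \<in> A"
    then have "b \<noteq> a" using insert by auto
    moreover have "poly q b = 0" using insert b by auto
    ultimately show "poly r b = 0" using r by simp
  qed
  then have "r = (\<Prod>a\<in>A. [:-a, 1:])" using insert(3) dr lr by blast
  then show ?case using r insert by simp
qed

lemma vieta:
  fixes x :: "'i \<Rightarrow> 'a::comm_ring_1"
  assumes "finite I" "k \<le> card I"
  shows "coeff (\<Prod>i\<in>I. [:-x i, 1:]) (card I - k) = (-1)^k * esym k I x"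
proof -
  have "(\<Prod>i\<in>I. [:-x i, 1:]) = (\<Prod>i\<in>I. [:-x i:] + [:0,1:])"
    by (intro prod.cong) auto
  also have "\<dots> = (\<Sum>B\<in>Pow I. (\<Prod>i\<in>B. [:-x i:]) * (\<Prod>i\<in>I-B. [:0,1:]))"
    by (rule prod_add[OF assms(1)])
  also have "\<dots> = (\<Sum>B\<in>Pow I. monom (\<Prod>i\<in>B. -x i) (card I - card B))"
  proof (rule sum.cong)
    fix B assume "B \<in> Pow I"
    then have "card (I - B) = card I - card B" using assms(1) by (auto intro: card_Diff_subset finite_subset)
    then show "(\<Prod>i\<in>B. [:-x i:]) * (\<Prod>i\<in>I-B. [:0,1:]) = monom (\<Prod>i\<in>B. -x i) (card I - card B)"
      by (simp add: prod_to_poly monom_altdef)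
  qed simp
  finally have eq: "(\<Prod>i\<in>I. [:-x i, 1:]) = (\<Sum>B\<in>Pow I. monom (\<Prod>i\<in>B. -x i) (card I - card B))" .
  have "coeff (\<Prod>i\<in>I. [:-x i, 1:]) (card I - k) = (\<Sum>B\<in>Pow I. if card B = k then (\<Prod>i\<in>B. -x i) else 0)"
    unfolding eq coeff_sum
  proof (rule sum.cong)
    fix B assume "B \<in> Pow I"
    then have "card B \<le> card I" using assms(1) by (auto intro: card_mono)
    then have "(card I - card B = card I - k) = (card B = k)" using assms(2) by auto
    then show "coeff (monom (\<Prod>i\<in>B. -x i) (card I - card B)) (card I - k) = (if card B = k then (\<Prod>i\<in>B. -x i) else 0)"
      by simp
  qed simp
  also have "\<dots> = (\<Sum>B\<in>{B\<in>Pow I. card B = k}. (\<Prod>i\<in>B. -x i))"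
    using assms(1) by (intro sum.inter_filter[symmetric]) simp
  also have "{B\<in>Pow I. card B = k} = {S. S \<subseteq> I \<and> card S = k}" by auto
  also have "(\<Sum>B\<in>{S. S \<subseteq> I \<and> card S = k}. (\<Prod>i\<in>B. -x i)) = (\<Sum>B\<in>{S. S \<subseteq> I \<and> card S = k}. (-1)^k * (\<Prod>i\<in>B. x i))"
    by (intro sum.cong) (auto simp: prod_uminus)
  finally show ?thesis unfolding esym_def by (simp add: sum_distrib_left)
qed


theorem mainTheorem10:
  fixes n k :: nat
  assumes "n \<ge> 1" and "k \<le> n"
  shows "esym k {1..n} (\<lambda>j. (sin ((2 * real j - 1) * pi / (4 * real n + 2)))^2)
    = (1/4)^k * fact (2*n - k) / (fact (2*n - 2*k) * fact k)"
proof -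
  define \<theta> where "\<theta> j = (2 * real j - 1) * pi / (4 * real n + 2)" for j :: nat
  define s where "s j = (sin (\<theta> j))^2" for j
  define y where "y j = 4 * s j" for j
  define c where "c i = (-1)^i * real ((2*n - i) choose i)" for i
  define q where "q = (\<Sum>i\<le>n. monom (c i) (n - i))"
  have coeffq: "coeff q i = c (n - i)" if "i \<le> n" for i
  proof -
    have "coeff q i = (\<Sum>m\<le>n. if m = n - i then c m else 0)"
      unfolding q_def coeff_sum by (intro sum.cong) (use that in auto)
    also have "\<dots> = c (n - i)" by (simp add: sum.delta)
    finally show ?thesis .
  qed
  have coeffq2: "coeff q i = 0" if "i > n" for i
    unfolding q_def coeff_sum using that by (intro sum.neutral) auto
  have degq: "degree q = n"
  proof (rule antisym)
    show "degree q \<le> n" using coeffq2 by (intro degree_le) auto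
    show "n \<le> degree q" using coeffq[of n] by (intro le_degree) (simp add: c_def)
  qed
  have lcq: "lead_coeff q = 1" using degq coeffq[of n] by (simp add: c_def)
  have polyq: "poly q z = (\<Sum>i\<le>n. c i * z^(n-i))" for z
    unfolding q_def poly_sum poly_monom ..
  have SSq: "SS (2*n) (2 * cos x) = poly q (4 * (cos x)^2)" for x
  proof -
    have "SS (2*n) (2 * cos x) = (\<Sum>i\<le>n. (-1)^i * real ((2*n-i) choose i) * (2 * cos x)^(2*n-2*i))"
      unfolding SS_def
    proof (rule sum.mono_neutral_right)
      show "\<forall>i\<in>{..2*n} - {..n}. (-1)^i * real ((2*n-i) choose i) * (2 * cos x)^(2*n-2*i) = 0"
        by (auto intro!: binomial_eq_0)
    qed auto
    also have "\<dots> = (\<Sum>i\<le>n. c i * (4 * (cos x)^2)^(n-i))"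
    proof (rule sum.cong)
      fix i assume "i \<in> {..n}"
      have "(2 * cos x)^(2*n-2*i) = ((2 * cos x)^2)^(n-i)"
      proof -
        have "2*n-2*i = 2*(n-i)" by simp
        then show ?thesis by (simp only: power_mult)
      qed
      moreover have "(2 * cos x)^2 = 4 * (cos x)^2" by (simp add: power_mult_distrib)
      ultimately show "(-1)^i * real ((2*n-i) choose i) * (2 * cos x)^(2*n-2*i) = c i * (4 * (cos x)^2)^(n-i)"
        by (simp only: c_def)
    qed simp
    finally show ?thesis using polyq by simp
  qed
  have roots: "poly q (y j) = 0" if j: "j \<in> {1..n}" for j
  proof -
    define x where "x = real (n + 1 - j) * pi / (2 * real n + 1)"
    have "\<theta> j = pi/2 - x"
      unfolding \<theta>_def x_def using j by (simp add: of_nat_diff field_simps)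
    then have sy: "y j = 4 * (cos x)^2" unfolding y_def s_def by (simp add: sin_cos_eq)
    have "real (Suc (2*n)) * x = real (n + 1 - j) * pi"
      unfolding x_def by (simp add: field_simps)
    then have "sin (real (Suc (2*n)) * x) = 0" by simp
    moreover have "sin x \<noteq> 0"
    proof -
      have "0 < x" unfolding x_def using j by (auto intro!: divide_pos_pos)
      moreover have "x < pi"
      proof -
        have "real (n + 1 - j) < 2 * real n + 1" using j by (simp add: of_nat_diff)
        then show ?thesis unfolding x_def by (simp add: divide_less_eq)
      qed
      ultimately show ?thesis using sin_gt_zero by force
    qed
    ultimately have "SS (2*n) (2 * cos x) = 0" using cheb[of "2*n" x] by simp
    then show ?thesis using SSq sy by simp
  qed
  have thr: "0 < \<theta> j \<and> \<theta> j < pi/2" if j: "j \<in> {1..n}" for j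
  proof -
    have "0 < (2 * real j - 1) * pi" using j by auto
    moreover have "(2 * real j - 1) * pi < pi/2 * (4 * real n + 2)"
    proof -
      have "2 * real j - 1 < (4 * real n + 2)/2" using j by auto
      then have "(2 * real j - 1) * pi < (4 * real n + 2)/2 * pi" by (intro mult_strict_right_mono) auto
      then show ?thesis by (simp add: field_simps)
    qed
    ultimately show ?thesis unfolding \<theta>_def by (auto simp: divide_less_eq)
  qed
  have inj: "inj_on y {1..n}"
  proof
    fix i j assume i: "i \<in> {1..n}" and j: "j \<in> {1..n}" and e: "y i = y j"
    have "sin (\<theta> i) > 0" "sin (\<theta> j) > 0" using thr[OF i] thr[OF j] by (auto intro!: sin_gt_zero)
    moreover have "(sin (\<theta> i))^2 = (sin (\<theta> j))^2" using e unfolding y_def s_def by simp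
    ultimately have "sin (\<theta> i) = sin (\<theta> j)" by (simp add: power2_eq_iff_nonneg)
    moreover have "- (pi/2) \<le> \<theta> i" "\<theta> i \<le> pi/2" "- (pi/2) \<le> \<theta> j" "\<theta> j \<le> pi/2"
      using thr[OF i] thr[OF j] by linarith+
    ultimately have "\<theta> i = \<theta> j" using sin_inj_pi by blast
    moreover have "(4 * real n + 2) \<noteq> 0" by (simp add: add_nonneg_eq_0_iff)
    ultimately have "(2 * real i - 1) * pi = (2 * real j - 1) * pi" unfolding \<theta>_def
      by (simp add: divide_cancel_right)
    then have "2 * real i - 1 = 2 * real j - 1" by simp
    then show "i = j" by simp
  qed
  have "q = (\<Prod>a\<in>y ` {1..n}. [:-a, 1:])"
    by (rule roots_prod) (use inj degq lcq roots in \<open>auto simp: card_image\<close>)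
  also have "\<dots> = (\<Prod>j\<in>{1..n}. [:-y j, 1:])" using inj by (simp add: prod.reindex)
  finally have qprod: "q = (\<Prod>j\<in>{1..n}. [:-y j, 1:])" .
  have "coeff q (n - k) = (-1)^k * esym k {1..n} y"
    using vieta[of "{1..n}" k y] assms by (simp add: qprod)
  moreover have "coeff q (n - k) = c k" using coeffq[of "n-k"] assms by simp
  ultimately have ey: "esym k {1..n} y = real ((2*n - k) choose k)"
    unfolding c_def by simp
  have "esym k {1..n} y = (\<Sum>S\<in>{S. S \<subseteq> {1..n} \<and> card S = k}. 4^k * (\<Prod>i\<in>S. s i))"
    unfolding esym_def y_def
  proof (rule sum.cong)
    fix S assume "S \<in> {S. S \<subseteq> {1..n} \<and> card S = k}"
    then have "card S = k" by simp
    then show "(\<Prod>i\<in>S. 4 * s i) = 4^k * (\<Prod>i\<in>S. s i)"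
      by (simp only: prod.distrib prod_constant)
  qed simp
  then have "esym k {1..n} y = 4^k * esym k {1..n} s"
    unfolding esym_def by (simp only: sum_distrib_left)
  then have "esym k {1..n} s = real ((2*n - k) choose k) / 4^k"
    using ey by (simp add: eq_divide_eq mult.commute)
  then have es: "esym k {1..n} s = (1/4)^k * real ((2*n - k) choose k)"
    by (simp add: power_one_over)
  have "real ((2*n - k) choose k) = fact (2*n - k) / (fact k * fact (2*n - k - k))"
  proof -
    have "k \<le> 2*n - k" using assms by simp
    then show ?thesis by (rule binomial_fact)
  qed
  moreover have "2*n - k - k = 2*n - 2*k" by simp
  ultimately have "real ((2*n - k) choose k) = fact (2*n - k) / (fact (2*n - 2*k) * fact k)"
    by (simp add: mult.commute)
  then show ?thesis using es unfolding s_def \<theta>_def by simp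
qed

end
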